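(* Consider a symmetric two-player Prisoner's Dilemma with payoffs $(a,a)$ for $(C,C)$, $(b,c)$ for $(C,D)$, $(c,b)$ for $(D,C)$ and $(d,d)$ for $(D,D)$, where $c>a>d>b$, and set $\Delta C=c-a>0$ and $\Delta D=d-b>0$. Let both players' tolerances be drawn from the same distribution on $[0,\infty)$ with continuous cumulative distribution function $F$. Then: (i) $\alpha\in[0,1]$ is a symmetric particularly cooperative equilibrium if and only if $1-\alpha=F(\alpha\,\Delta C+(1-\alpha)\,\Delta D)$, and at least one such $\alpha$ exists; (ii) $\alpha=0$ is a symmetric particularly cooperative equilibrium if and only if $F(\Delta D)=1$; (iii) if $\Delta C>\Delta D$, there is exactly one symmetric particularly cooperative equilibrium.
   Context: If a player believes the other player plays $C$ with probability $\alpha$, the gain from defecting rather than cooperating is $\alpha\,\Delta C+(1-\alpha)\,\Delta D$, so a player with tolerance $t$ finds $C$ to be a $t$-best response (i.e., $u(D)\le u(C)+t$) iff $t\ge \alpha\,\Delta C+(1-\alpha)\,\Delta D$. A symmetric particularly cooperative equilibrium is a number $\alpha\in[0,1]$ such that, when each player believes the other cooperates with probability $\alpha$, every tolerance type for which $C$ is a $t$-best response plays $C$, every other type plays $D$ (the only $t$-best response for it), and the resulting overall probability that a player cooperates equals $\alpha$; that is, $\alpha=\Pr_F\big[T\ge \alpha\,\Delta C+(1-\alpha)\,\Delta D\big]$ where $T$ is a tolerance drawn from $F$. *)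

theory Defs
  imports "HOL-Probability.Probability"
begin

text \<open>Gain from defecting rather than cooperating when the opponent is believed
to cooperate with probability alpha.\<close>
definition defect_gain :: "real \<Rightarrow> real \<Rightarrow> real \<Rightarrow> real" where
  "defect_gain dC dD \<alpha> = \<alpha> * dC + (1 - \<alpha>) * dD"

definition C_t_best :: "real \<Rightarrow> real \<Rightarrow> real \<Rightarrow> real \<Rightarrow> bool" where
  "C_t_best dC dD \<alpha> t \<longleftrightarrow> defect_gain dC dD \<alpha> \<le> t"

definition sym_pce :: "real measure \<Rightarrow> real \<Rightarrow> real \<Rightarrow> real \<Rightarrow> bool" where
  "sym_pce M dC dD \<alpha> \<longleftrightarrow> \<alpha> \<in> {0..1} \<and> \<alpha> = measure M {t. C_t_best dC dD \<alpha> t}"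

end

theory Submission
  imports Defs
begin

lemma key:
  fixes M :: "real measure"
  assumes "prob_space M" and "sets M = sets borel"
    and "\<And>x. F x = measure M {..x}"
    and "continuous_on UNIV F"
  shows "measure M {t. g \<le> t} = 1 - F g"
proof -
  interpret real_distribution M using assms(1,2) by (simp add: real_distribution_def real_distribution_axioms_def)
  have Fc: "F = cdf M" using assms(3) by (auto simp: cdf_def)
  have "isCont (cdf M) g" using assms(4) Fc by (simp add: continuous_on_eq_continuous_at)
  hence z: "measure M {g} = 0" using isCont_cdf by simp
  have "measure M {..g} = measure M ({..<g} \<union> {g})" by (metis ivl_disj_un_singleton(2))
  also have "\<dots> = measure M {..<g} + measure M {g}"
    by (rule finite_measure_Union) auto
  finally have a: "measure M {..g} = measure M {..<g}" using z by simp
  have "{t. g \<le> t} = space M - {..<g}" by auto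
  hence "measure M {t. g \<le> t} = 1 - measure M {..<g}" using prob_compl[of "{..<g}"] by simp
  thus ?thesis using a assms(3) by simp
qed

theorem theorem4p1:
  fixes a b c d :: real and M :: "real measure" and F :: "real \<Rightarrow> real"
  assumes "c > a" and "a > d" and "d > b"
    and "prob_space M" and "sets M = sets borel"
    and "measure M {..<0} = 0"
    and "\<And>x. F x = measure M {..x}"
    and "continuous_on UNIV F"
  shows "(\<forall>\<alpha>. sym_pce M (c - a) (d - b) \<alpha> \<longleftrightarrow>
              \<alpha> \<in> {0..1} \<and> 1 - \<alpha> = F (\<alpha> * (c - a) + (1 - \<alpha>) * (d - b)))
         \<and> (\<exists>\<alpha>. sym_pce M (c - a) (d - b) \<alpha>)
         \<and> (sym_pce M (c - a) (d - b) 0 \<longleftrightarrow> F (d - b) = 1)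
         \<and> (c - a > d - b \<longrightarrow> (\<exists>!\<alpha>. sym_pce M (c - a) (d - b) \<alpha>))"
proof -
  interpret real_distribution M using assms(4,5) by (simp add: real_distribution_def real_distribution_axioms_def)
  define g where "g = (\<lambda>\<alpha>::real. \<alpha> * (c - a) + (1 - \<alpha>) * (d - b))"
  have Fc: "F = cdf M" using assms(7) by (auto simp: cdf_def)
  have mono: "x \<le> y \<Longrightarrow> F x \<le> F y" for x y using Fc cdf_nondecreasing by simp
  have F01: "0 \<le> F x \<and> F x \<le> 1" for x using Fc cdf_nonneg cdf_bounded_prob by simp
  have eq: "sym_pce M (c - a) (d - b) \<alpha> \<longleftrightarrow> \<alpha> \<in> {0..1} \<and> 1 - \<alpha> = F (g \<alpha>)" for \<alpha>
    using key[OF assms(4,5,7,8), of "g \<alpha>"]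
    by (auto simp: sym_pce_def C_t_best_def defect_gain_def g_def)
  have ex: "\<exists>\<alpha>. sym_pce M (c - a) (d - b) \<alpha>"
  proof -
    define h where "h = (\<lambda>\<alpha>. \<alpha> - 1 + F (g \<alpha>))"
    have cg: "continuous_on {0..1} g" unfolding g_def by (intro continuous_intros)
    have ch: "continuous_on {0..1} h" unfolding h_def
      by (intro continuous_intros continuous_on_compose2[OF assms(8) cg]) auto
    have "h 0 \<le> 0" "0 \<le> h 1" using F01 by (auto simp: h_def)
    then obtain x where "x \<in> {0..1}" "h x = 0"
      using IVT'[of h 0 0 1] ch by auto
    thus ?thesis using eq by (auto simp: h_def)
  qed
  have uniq: "c - a > d - b \<longrightarrow> (\<exists>!\<alpha>. sym_pce M (c - a) (d - b) \<alpha>)"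
  proof
    assume gt: "c - a > d - b"
    have gm: "x \<le> y \<Longrightarrow> g x \<le> g y" for x y
      unfolding g_def using gt mult_right_mono[of x y "(c-a) - (d-b)"]
      by (simp add: algebra_simps)
    show "\<exists>!\<alpha>. sym_pce M (c - a) (d - b) \<alpha>"
    proof (rule ex_ex1I[OF ex])
      fix x y assume "sym_pce M (c - a) (d - b) x" "sym_pce M (c - a) (d - b) y"
      hence hx: "1 - x = F (g x)" and hy: "1 - y = F (g y)" using eq by auto
      show "x = y"
      proof (rule ccontr)
        assume "x \<noteq> y"
        then consider "x < y" | "y < x" by linarith
        thus False
        proof cases
          case 1 thus False using mono[OF gm[of x y]] hx hy by simp
        next
          case 2 thus False using mono[OF gm[of y x]] hx hy by simp
        qed
      qed
    qed
  qed
  show ?thesis using eq ex uniq by (auto simp: g_def)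
qed

end
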